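(* Let $r_0>0$, $R_c>0$, $D>0$. Let $H\subset[0,D]$ be a finite set (helper positions) and $V\subset\mathbb{R}$ a finite set (VoI positions), with $H\cap V=\emptyset$. Call a finite set of pairs $\{(h_1,v_1),\dots,(h_n,v_n)\}$ a \emph{feasible schedule} if the $h_j\in H$ are pairwise distinct, the $v_j\in V$ are pairwise distinct, $|h_j-v_j|\le r_0$ for every $j$, and $|h_i-h_j|\ge R_c$ for all $i\neq j$. Define the greedy schedule as follows. Let $g_1$ be the smallest $x\in H$ such that $[x-r_0,x+r_0]\cap V\neq\emptyset$, and let $u_1$ be the smallest element of $[g_1-r_0,g_1+r_0]\cap V$. Having defined $(g_1,u_1),\dots,(g_k,u_k)$, let $g_{k+1}$ be the smallest $x\in H$ with $x\ge g_k+R_c$ such that $[x-r_0,x+r_0]$ contains an element of $V\setminus\{u_1,\dots,u_k\}$, and let $u_{k+1}$ be the smallest element of $([g_{k+1}-r_0,g_{k+1}+r_0]\cap V)\setminus\{u_1,\dots,u_k\}$. Stop when no such $x$ exists (or when no $g_1$ exists, in which case the greedy schedule is empty). Then the greedy schedule $\{(g_1,u_1),\dots,(g_N,u_N)\}$ is a feasible schedule, and every feasible schedule has at most $N$ pairs.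
   Context: This models a stretch of road (a line) between infrastructure points: "helpers" are vehicles that may transmit, VoIs (vehicles of interest) are receivers, $r_0$ is the vehicle radio range and $R_c$ is the carrier-sensing range, so simultaneously transmitting helpers must be at mutual distance at least $R_c$, each transmitter sends to one VoI within distance $r_0$, and each VoI receives from at most one helper. *)

theory Defs
  imports Complex_Main
begin

definition is_least_el :: "(real \<Rightarrow> bool) \<Rightarrow> real \<Rightarrow> bool" where
  "is_least_el P x \<longleftrightarrow> P x \<and> (\<forall>y. P y \<longrightarrow> x \<le> y)"

definition feasible_schedule ::
  "real set \<Rightarrow> real set \<Rightarrow> real \<Rightarrow> real \<Rightarrow> (real \<times> real) set \<Rightarrow> bool" where
  "feasible_schedule H V r0 Rc S \<longleftrightarrow>
     finite S \<and> fst ` S \<subseteq> H \<and> snd ` S \<subseteq> V \<and>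
     inj_on fst S \<and> inj_on snd S \<and>
     (\<forall>p\<in>S. \<bar>fst p - snd p\<bar> \<le> r0) \<and>
     (\<forall>p\<in>S. \<forall>q\<in>S. p \<noteq> q \<longrightarrow> \<bar>fst p - fst q\<bar> \<ge> Rc)"

definition greedy_cand ::
  "real set \<Rightarrow> real set \<Rightarrow> real \<Rightarrow> real \<Rightarrow> (real \<times> real) list \<Rightarrow> real \<Rightarrow> bool" where
  "greedy_cand H V r0 Rc prev x \<longleftrightarrow>
     x \<in> H \<and> (prev = [] \<or> x \<ge> fst (last prev) + Rc) \<and>
     (\<exists>v\<in>V - snd ` set prev. \<bar>x - v\<bar> \<le> r0)"

definition is_greedy_schedule ::
  "real set \<Rightarrow> real set \<Rightarrow> real \<Rightarrow> real \<Rightarrow> (real \<times> real) list \<Rightarrow> bool" where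
  "is_greedy_schedule H V r0 Rc gs \<longleftrightarrow>
     (\<forall>k < length gs.
        is_least_el (greedy_cand H V r0 Rc (take k gs)) (fst (gs ! k)) \<and>
        is_least_el (\<lambda>v. v \<in> V - snd ` set (take k gs) \<and> \<bar>fst (gs ! k) - v\<bar> \<le> r0)
                    (snd (gs ! k))) \<and>
     \<not> (\<exists>x. greedy_cand H V r0 Rc gs x)"

end

theory Submission
  imports Defs
begin

lemma take_last_nth: "0 < k \<Longrightarrow> k \<le> length gs \<Longrightarrow> last (take k gs) = gs ! (k - 1)"
proof -
  assume a: "0 < k" "k \<le> length gs"
  then have ne: "take k gs \<noteq> []" by auto
  have "last (take k gs) = take k gs ! (length (take k gs) - 1)" using ne by (rule last_conv_nth)
  also have "\<dots> = take k gs ! (k - 1)" using a by (simp add: min_def)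
  also have "\<dots> = gs ! (k - 1)" using a by simp
  finally show ?thesis .
qed

lemma set_all_nth: "(\<And>i. i < length gs \<Longrightarrow> P (gs!i)) \<Longrightarrow> p \<in> set gs \<Longrightarrow> P p"
  by (metis in_set_conv_nth)

lemma gfacts:
  assumes G: "is_greedy_schedule H V r0 Rc gs" and k: "k < length gs"
  shows "greedy_cand H V r0 Rc (take k gs) (fst (gs!k))"
    "\<And>y. greedy_cand H V r0 Rc (take k gs) y \<Longrightarrow> fst (gs!k) \<le> y"
    "snd (gs!k) \<in> V" "snd (gs!k) \<notin> snd ` set (take k gs)"
    "\<bar>fst (gs!k) - snd (gs!k)\<bar> \<le> r0"
    "\<And>v. v \<in> V \<Longrightarrow> v \<notin> snd ` set (take k gs) \<Longrightarrow> \<bar>fst (gs!k) - v\<bar> \<le> r0 \<Longrightarrow> snd (gs!k) \<le> v"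
  using G k unfolding is_greedy_schedule_def is_least_el_def by blast+

lemma incr:
  assumes G: "is_greedy_schedule H V r0 Rc gs" and Rc: "Rc > 0"
  shows "i < j \<Longrightarrow> j < length gs \<Longrightarrow> fst (gs!i) + Rc \<le> fst (gs!j)"
proof (induction j)
  case 0 then show ?case by simp
next
  case (Suc j)
  have c: "greedy_cand H V r0 Rc (take (Suc j) gs) (fst (gs!Suc j))"
    using gfacts(1)[OF G Suc.prems(2)] .
  have "take (Suc j) gs \<noteq> []" using Suc.prems by (cases gs) auto
  with c have "fst (gs!Suc j) \<ge> fst (last (take (Suc j) gs)) + Rc"
    unfolding greedy_cand_def by blast
  moreover have "last (take (Suc j) gs) = gs ! j" using take_last_nth[of "Suc j" gs] Suc.prems by simp
  ultimately have a: "fst (gs!Suc j) \<ge> fst (gs!j) + Rc" by simp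
  show ?case
  proof (cases "i = j")
    case True then show ?thesis using a by simp
  next
    case False
    then have "fst (gs!i) + Rc \<le> fst (gs!j)" using Suc by simp
    then show ?thesis using a Rc by simp
  qed
qed

lemma sep:
  assumes G: "is_greedy_schedule H V r0 Rc gs" and Rc: "Rc > 0"
    and "i < length gs" "j < length gs" "i \<noteq> j"
  shows "Rc \<le> \<bar>fst (gs!i) - fst (gs!j)\<bar>"
proof (cases "i < j")
  case True then show ?thesis using incr[OF G Rc True] assms by simp
next
  case False then have "j < i" using assms by simp
  then show ?thesis using incr[OF G Rc \<open>j < i\<close>] assms by simp
qed

lemma snd_ne:
  assumes G: "is_greedy_schedule H V r0 Rc gs" and "i < j" "j < length gs"
  shows "snd (gs!i) \<noteq> snd (gs!j)"
proof -
  have "take j gs ! i = gs ! i" "i < length (take j gs)" using assms by auto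
  then have "gs ! i \<in> set (take j gs)" by (metis nth_mem)
  then have "snd (gs ! i) \<in> snd ` set (take j gs)" by (rule imageI)
  then show ?thesis using gfacts(4)[OF G assms(3)] by metis
qed

lemma exists_greedy:
  assumes fH: "finite H" and fV: "finite V"
  shows "\<forall>prev::(real\<times>real) list. card (V - snd ` set prev) = n \<longrightarrow>
     (\<forall>k < length prev.
        is_least_el (greedy_cand H V r0 Rc (take k prev)) (fst (prev ! k)) \<and>
        is_least_el (\<lambda>v. v \<in> V - snd ` set (take k prev) \<and> \<bar>fst (prev ! k) - v\<bar> \<le> r0)
                    (snd (prev ! k))) \<longrightarrow>
     (\<exists>gs. is_greedy_schedule H V r0 Rc gs)"
proof (induction n rule: less_induct)
  case (less n)
  show ?case
  proof (intro allI impI)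
    fix prev :: "(real\<times>real) list"
    assume cn: "card (V - snd ` set prev) = n"
    assume P: "\<forall>k < length prev.
        is_least_el (greedy_cand H V r0 Rc (take k prev)) (fst (prev ! k)) \<and>
        is_least_el (\<lambda>v. v \<in> V - snd ` set (take k prev) \<and> \<bar>fst (prev ! k) - v\<bar> \<le> r0)
                    (snd (prev ! k))"
    show "\<exists>gs. is_greedy_schedule H V r0 Rc gs"
    proof (cases "\<exists>x. greedy_cand H V r0 Rc prev x")
      case False
      then show ?thesis using P unfolding is_greedy_schedule_def by blast
    next
      case True
      define C where "C = {x. greedy_cand H V r0 Rc prev x}"
      have fC: "finite C" using fH unfolding C_def greedy_cand_def
        by (rule rev_finite_subset) auto
      have neC: "C \<noteq> {}" using True C_def by auto
      define g where "g = Min C"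
      have gC: "g \<in> C" using fC neC g_def by simp
      have gmin: "\<And>y. greedy_cand H V r0 Rc prev y \<Longrightarrow> g \<le> y"
        using fC g_def C_def by simp
      define U where "U = {v. v \<in> V - snd ` set prev \<and> \<bar>g - v\<bar> \<le> r0}"
      have fU: "finite U" using fV unfolding U_def by (rule rev_finite_subset) auto
      have neU: "U \<noteq> {}" using gC unfolding C_def greedy_cand_def U_def by auto
      define u where "u = Min U"
      have uU: "u \<in> U" using fU neU u_def by simp
      have umin: "\<And>v. v \<in> V - snd ` set prev \<and> \<bar>g - v\<bar> \<le> r0 \<Longrightarrow> u \<le> v"
        using fU u_def U_def by simp
      define prev' where "prev' = prev @ [(g,u)]"
      have P': "\<forall>k < length prev'.
        is_least_el (greedy_cand H V r0 Rc (take k prev')) (fst (prev' ! k)) \<and>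
        is_least_el (\<lambda>v. v \<in> V - snd ` set (take k prev') \<and> \<bar>fst (prev' ! k) - v\<bar> \<le> r0)
                    (snd (prev' ! k))"
      proof (intro allI impI)
        fix k assume k: "k < length prev'"
        show "is_least_el (greedy_cand H V r0 Rc (take k prev')) (fst (prev' ! k)) \<and>
        is_least_el (\<lambda>v. v \<in> V - snd ` set (take k prev') \<and> \<bar>fst (prev' ! k) - v\<bar> \<le> r0)
                    (snd (prev' ! k))"
        proof (cases "k < length prev")
          case True
          then have "take k prev' = take k prev" "prev' ! k = prev ! k"
            unfolding prev'_def by (auto simp: nth_append)
          then show ?thesis using P True by simp
        next
          case False
          then have "k = length prev" using k prev'_def by simp
          then have "take k prev' = prev" "prev' ! k = (g,u)" unfolding prev'_def by auto
          then show ?thesis unfolding is_least_el_def using gC gmin uU umin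
            unfolding C_def U_def by auto
        qed
      qed
      have "V - snd ` set prev' \<subset> V - snd ` set prev"
        using uU unfolding prev'_def U_def by auto
      then have "card (V - snd ` set prev') < n"
        using cn fV psubset_card_mono[of "V - snd ` set prev"] by auto
      then show ?thesis using less P' by blast
    qed
  qed
qed

lemma opt_step:
  assumes G: "is_greedy_schedule H V r0 Rc gs" and Rc: "Rc > 0"
  shows "\<forall>k. length gs - k = m \<longrightarrow> k \<le> length gs \<longrightarrow>
    (\<forall>S. feasible_schedule H V r0 Rc S \<longrightarrow> (\<forall>p\<in>S. k = 0 \<or> fst p \<ge> fst (gs!(k-1)) + Rc) \<longrightarrow>
       (\<forall>p\<in>S. snd p \<notin> snd ` set (take k gs)) \<longrightarrow> card S \<le> length gs - k)"
proof (induction m)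
  case 0
  show ?case
  proof (intro allI impI)
    fix k S
    assume k: "length gs - k = 0" "k \<le> length gs" and F: "feasible_schedule H V r0 Rc S"
      and B: "\<forall>p\<in>S. k = 0 \<or> fst p \<ge> fst (gs!(k-1)) + Rc"
      and U: "\<forall>p\<in>S. snd p \<notin> snd ` set (take k gs)"
    have kl: "k = length gs" using k by simp
    have "S = {}"
    proof (rule ccontr)
      assume "S \<noteq> {}"
      then obtain p where p: "p \<in> S" by blast
      have "greedy_cand H V r0 Rc gs (fst p)"
        unfolding greedy_cand_def
      proof (intro conjI)
        show "fst p \<in> H" using F p unfolding feasible_schedule_def by blast
        show "gs = [] \<or> fst (last gs) + Rc \<le> fst p"
        proof (cases "gs = []")
          case False
          then have "k > 0" using kl by simp
          then have "fst p \<ge> fst (gs!(k-1)) + Rc" using B p by blast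
          moreover have "last gs = gs!(k-1)" using kl False by (simp add: last_conv_nth)
          ultimately show ?thesis by simp
        qed simp
        show "\<exists>v\<in>V - snd ` set gs. \<bar>fst p - v\<bar> \<le> r0"
          using F p U kl unfolding feasible_schedule_def by (intro bexI[of _ "snd p"]) auto
      qed
      then show False using G unfolding is_greedy_schedule_def by blast
    qed
    then show "card S \<le> length gs - k" by simp
  qed
next
  case (Suc m)
  show ?case
  proof (intro allI impI)
    fix k S
    assume k: "length gs - k = Suc m" "k \<le> length gs" and F: "feasible_schedule H V r0 Rc S"
      and B: "\<forall>p\<in>S. k = 0 \<or> fst p \<ge> fst (gs!(k-1)) + Rc"
      and U: "\<forall>p\<in>S. snd p \<notin> snd ` set (take k gs)"
    have kl: "k < length gs" using k by simp
    have fS: "finite S" and HS: "fst ` S \<subseteq> H" and VS: "snd ` S \<subseteq> V"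
      and if1: "inj_on fst S" and is1: "inj_on snd S"
      and dS: "\<forall>p\<in>S. \<bar>fst p - snd p\<bar> \<le> r0"
      and sS: "\<forall>p\<in>S. \<forall>q\<in>S. p \<noteq> q \<longrightarrow> \<bar>fst p - fst q\<bar> \<ge> Rc"
      using F unfolding feasible_schedule_def by auto
    define g where "g = fst (gs!k)"
    define u where "u = snd (gs!k)"
    have tk: "take (Suc k) gs = take k gs @ [(g,u)]"
      using kl by (simp add: take_Suc_conv_app_nth g_def u_def)
    have IH: "\<And>S'. feasible_schedule H V r0 Rc S' \<Longrightarrow> (\<forall>p\<in>S'. fst p \<ge> g + Rc) \<Longrightarrow>
       (\<forall>p\<in>S'. snd p \<notin> snd ` set (take k gs) \<and> snd p \<noteq> u) \<Longrightarrow> card S' \<le> length gs - Suc k"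
    proof -
      fix S' assume a: "feasible_schedule H V r0 Rc S'" "\<forall>p\<in>S'. fst p \<ge> g + Rc"
        "\<forall>p\<in>S'. snd p \<notin> snd ` set (take k gs) \<and> snd p \<noteq> u"
      have "\<forall>p\<in>S'. Suc k = 0 \<or> fst p \<ge> fst (gs!(Suc k-1)) + Rc" using a(2) g_def by simp
      moreover have "\<forall>p\<in>S'. snd p \<notin> snd ` set (take (Suc k) gs)" using a(3) tk by auto
      moreover have "length gs - Suc k = m" "Suc k \<le> length gs" using k kl by auto
      ultimately show "card S' \<le> length gs - Suc k"
        using spec[OF Suc.IH, of "Suc k"] a(1) by blast
    qed
    show "card S \<le> length gs - k"
    proof (cases "S = {}")
      case True then show ?thesis by simp
    next
      case False
      define h1 where "h1 = Min (fst ` S)"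
      have "h1 \<in> fst ` S" using False fS h1_def by simp
      then obtain v1 where p1: "(h1, v1) \<in> S" by force
      have h1min: "\<And>p. p \<in> S \<Longrightarrow> h1 \<le> fst p" using fS h1_def by simp
      have others: "\<And>p. p \<in> S \<Longrightarrow> p \<noteq> (h1,v1) \<Longrightarrow> fst p \<ge> h1 + Rc"
      proof -
        fix p assume p: "p \<in> S" "p \<noteq> (h1,v1)"
        have "\<bar>fst p - h1\<bar> \<ge> Rc" using sS p p1 by force
        then show "fst p \<ge> h1 + Rc" using h1min[OF p(1)] by simp
      qed
      have v1V: "v1 \<in> V" using VS p1 by force
      have v1U: "v1 \<notin> snd ` set (take k gs)" using U p1 by force
      have d1: "\<bar>h1 - v1\<bar> \<le> r0" using dS p1 by force
      have cand: "greedy_cand H V r0 Rc (take k gs) h1"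
        unfolding greedy_cand_def
      proof (intro conjI)
        show "h1 \<in> H" using HS p1 by force
        show "take k gs = [] \<or> fst (last (take k gs)) + Rc \<le> h1"
        proof (cases "k = 0")
          case False
          then have "h1 \<ge> fst (gs!(k-1)) + Rc" using B p1 by force
          then show ?thesis using take_last_nth[of k gs] False kl by simp
        qed simp
        show "\<exists>v\<in>V - snd ` set (take k gs). \<bar>h1 - v\<bar> \<le> r0"
          using v1V v1U d1 by blast
      qed
      have gh: "g \<le> h1" using gfacts(2)[OF G kl cand] g_def by simp
      have uv: "u \<le> v1"
      proof (cases "v1 \<le> g + r0")
        case True
        have "\<bar>g - v1\<bar> \<le> r0" using True d1 gh by simp
        then show ?thesis using gfacts(6)[OF G kl v1V v1U] g_def u_def by simp
      next
        case False
        then show ?thesis using gfacts(5)[OF G kl] g_def u_def by simp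
      qed
      show ?thesis
      proof (cases "\<exists>q\<in>S. snd q = u \<and> q \<noteq> (h1,v1)")
        case False
        define S' where "S' = S - {(h1,v1)}"
        have F': "feasible_schedule H V r0 Rc S'"
          using F unfolding feasible_schedule_def S'_def by (auto intro: inj_on_subset)
        have "card S' \<le> length gs - Suc k"
        proof (rule IH[OF F'])
          show "\<forall>p\<in>S'. g + Rc \<le> fst p" using others gh S'_def by force
          show "\<forall>p\<in>S'. snd p \<notin> snd ` set (take k gs) \<and> snd p \<noteq> u"
            using U False unfolding S'_def by blast
        qed
        moreover have "card S = Suc (card S')"
          using card.remove[OF fS p1] unfolding S'_def by simp
        ultimately show ?thesis using kl by simp
      next
        case True
        then obtain q where q: "q \<in> S" "snd q = u" "q \<noteq> (h1,v1)" by blast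
        define R where "R = S - {(h1,v1), q}"
        define S' where "S' = insert (fst q, v1) R"
        have uv1: "u \<noteq> v1"
        proof
          assume "u = v1"
          then have "snd q = snd (h1,v1)" using q by simp
          then have "q = (h1,v1)" using inj_onD[OF is1] q(1) p1 by blast
          then show False using q(3) by simp
        qed
        have nR: "(fst q, v1) \<notin> R"
        proof
          assume "(fst q, v1) \<in> R"
          then have "(fst q, v1) \<in> S" "(fst q, v1) \<noteq> q" using R_def q uv1 by auto
          moreover have "fst (fst q, v1) = fst q" by simp
          ultimately show False using inj_onD[OF if1] q(1) by blast
        qed
        have fR: "finite R" using fS R_def by simp
        have cS: "card S = Suc (Suc (card R))"
        proof -
          have "S = insert (h1,v1) (insert q R)" using p1 q R_def by auto
          moreover have "(h1,v1) \<notin> insert q R" using q R_def by auto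
          moreover have "q \<notin> R" using R_def by auto
          ultimately show ?thesis using fR by simp
        qed
        have cS': "card S' = Suc (card R)" using nR fR S'_def by simp
        have RS: "R \<subseteq> S" using R_def by auto
        have qR: "\<And>p. p \<in> R \<Longrightarrow> fst p \<noteq> fst q \<and> snd p \<noteq> v1 \<and> snd p \<noteq> u"
        proof -
          fix p assume p: "p \<in> R"
          have "p \<in> S" "p \<noteq> q" "p \<noteq> (h1,v1)" using p R_def by auto
          have 1: "fst p \<noteq> fst q" using inj_onD[OF if1] \<open>p \<in> S\<close> \<open>p \<noteq> q\<close> q(1) by blast
          have 2: "snd p \<noteq> v1"
          proof
            assume "snd p = v1"
            then have "snd p = snd (h1,v1)" by simp
            then show False using inj_onD[OF is1] \<open>p \<in> S\<close> \<open>p \<noteq> (h1,v1)\<close> p1 by blast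
          qed
          have 3: "snd p \<noteq> u" using inj_onD[OF is1] \<open>p \<in> S\<close> \<open>p \<noteq> q\<close> q(1) q(2) by metis
          show "fst p \<noteq> fst q \<and> snd p \<noteq> v1 \<and> snd p \<noteq> u" using 1 2 3 by blast
        qed
        have dq: "\<bar>fst q - v1\<bar> \<le> r0"
        proof -
          have "\<bar>fst q - u\<bar> \<le> r0" using dS q by force
          moreover have "fst q \<ge> h1" using h1min q by simp
          ultimately show ?thesis using uv d1 by simp
        qed
        have injS': "inj_on fst S'" unfolding S'_def inj_on_insert using inj_on_subset[OF if1 RS] qR
            by fastforce
        have F': "feasible_schedule H V r0 Rc S'"
          unfolding feasible_schedule_def
        proof (intro conjI)
          show "finite S'" using fR S'_def by simp
          show "fst ` S' \<subseteq> H" using HS RS q S'_def by auto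
          show "snd ` S' \<subseteq> V" using VS RS v1V S'_def by auto
          show "inj_on fst S'" by (rule injS')
          show "inj_on snd S'" unfolding S'_def inj_on_insert using inj_on_subset[OF is1 RS] qR
            by fastforce
          show "\<forall>p\<in>S'. \<bar>fst p - snd p\<bar> \<le> r0" unfolding S'_def using dS RS dq by auto
          show "\<forall>p\<in>S'. \<forall>q'\<in>S'. p \<noteq> q' \<longrightarrow> Rc \<le> \<bar>fst p - fst q'\<bar>"
          proof (intro ballI impI)
            fix p q' assume a: "p \<in> S'" "q' \<in> S'" "p \<noteq> q'"
            define f where "f = (\<lambda>x. if x = (fst q, v1) then q else x)"
            have fS': "\<And>x. x \<in> S' \<Longrightarrow> f x \<in> S \<and> fst (f x) = fst x"
              unfolding f_def S'_def using RS q by auto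
            have "f p \<noteq> f q'"
            proof
              assume e: "f p = f q'"
              then have "fst p = fst q'" using fS' a by metis
              then show False using inj_onD[OF injS'] a by blast
            qed
            then have "Rc \<le> \<bar>fst (f p) - fst (f q')\<bar>" using sS fS' a by blast
            then show "Rc \<le> \<bar>fst p - fst q'\<bar>" using fS' a by simp
          qed
        qed
        have "card S' \<le> length gs - Suc k"
        proof (rule IH[OF F'])
          show "\<forall>p\<in>S'. g + Rc \<le> fst p"
          proof
            fix p assume p: "p \<in> S'"
            have fq: "fst q \<ge> h1 + Rc" using others q(1) q(3) by blast
            show "g + Rc \<le> fst p"
            proof (cases "p = (fst q, v1)")
              case True then show ?thesis using fq gh by simp
            next
              case False
              then have "p \<in> S" "p \<noteq> (h1,v1)" using p unfolding S'_def R_def by auto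
              then show ?thesis using others gh by fastforce
            qed
          qed
          show "\<forall>p\<in>S'. snd p \<notin> snd ` set (take k gs) \<and> snd p \<noteq> u"
          proof
            fix p assume p: "p \<in> S'"
            show "snd p \<notin> snd ` set (take k gs) \<and> snd p \<noteq> u"
            proof (cases "p = (fst q, v1)")
              case True then show ?thesis using v1U uv1 by simp
            next
              case False
              then have "p \<in> R" using p unfolding S'_def by auto
              then show ?thesis using U RS qR by blast
            qed
          qed
        qed
        then show ?thesis using cS cS' kl by simp
      qed
    qed
  qed
qed

theorem theorem2:
  fixes r0 Rc D :: real and H V :: "real set"
  assumes "r0 > 0" "Rc > 0" "D > 0"
    and "finite H" "H \<subseteq> {0..D}" "finite V" "H \<inter> V = {}"
  shows "(\<exists>gs. is_greedy_schedule H V r0 Rc gs) \<and>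
         (\<forall>gs. is_greedy_schedule H V r0 Rc gs \<longrightarrow>
            feasible_schedule H V r0 Rc (set gs) \<and> card (set gs) = length gs \<and>
            (\<forall>S. feasible_schedule H V r0 Rc S \<longrightarrow> card S \<le> length gs))"
proof (intro conjI allI impI)
  show "\<exists>gs. is_greedy_schedule H V r0 Rc gs"
    using exists_greedy[OF assms(4) assms(6), of "card V" r0 Rc] by (metis list.set(1) image_empty Diff_empty length_0_conv not_less0)
next
  fix gs assume G: "is_greedy_schedule H V r0 Rc gs"
  have Rc: "Rc > 0" by fact
  have dist: "distinct gs"
    unfolding distinct_conv_nth
  proof (intro allI impI)
    fix i j assume "i < length gs" "j < length gs" "i \<noteq> j"
    then have "Rc \<le> \<bar>fst (gs!i) - fst (gs!j)\<bar>" using sep[OF G Rc] by blast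
    then show "gs!i \<noteq> gs!j" using Rc by auto
  qed
  then show "card (set gs) = length gs" by (rule distinct_card)
  show "feasible_schedule H V r0 Rc (set gs)"
    unfolding feasible_schedule_def
  proof (intro conjI)
    show "finite (set gs)" by simp
    show "fst ` set gs \<subseteq> H"
    proof
      fix x assume "x \<in> fst ` set gs"
      then obtain i where "i < length gs" "x = fst (gs!i)" by (auto simp: in_set_conv_nth)
      then show "x \<in> H" using gfacts(1)[OF G] unfolding greedy_cand_def by blast
    qed
    show "snd ` set gs \<subseteq> V" using set_all_nth[of gs "\<lambda>p. snd p \<in> V", OF gfacts(3)[OF G]] by blast
    show "inj_on fst (set gs)"
    proof (rule inj_onI)
      fix p q assume "p \<in> set gs" "q \<in> set gs" "fst p = fst q"
      then obtain i j where "i < length gs" "j < length gs" "p = gs!i" "q = gs!j"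
        by (auto simp: in_set_conv_nth)
      then show "p = q" using sep[OF G Rc] \<open>fst p = fst q\<close> Rc by force
    qed
    show "inj_on snd (set gs)"
    proof (rule inj_onI)
      fix p q assume "p \<in> set gs" "q \<in> set gs" "snd p = snd q"
      then obtain i j where ij: "i < length gs" "j < length gs" "p = gs!i" "q = gs!j"
        by (auto simp: in_set_conv_nth)
      show "p = q"
      proof (cases i j rule: linorder_cases)
        case less then show ?thesis using snd_ne[OF G less] ij \<open>snd p = snd q\<close> by simp
      next
        case greater then show ?thesis using snd_ne[OF G greater] ij \<open>snd p = snd q\<close> by simp
      qed (use ij in simp)
    qed
    show "\<forall>p\<in>set gs. \<bar>fst p - snd p\<bar> \<le> r0"
      using set_all_nth[of gs "\<lambda>p. \<bar>fst p - snd p\<bar> \<le> r0", OF gfacts(5)[OF G]] by blast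
    show "\<forall>p\<in>set gs. \<forall>q\<in>set gs. p \<noteq> q \<longrightarrow> Rc \<le> \<bar>fst p - fst q\<bar>"
    proof (intro ballI impI)
      fix p q assume "p \<in> set gs" "q \<in> set gs" "p \<noteq> q"
      then obtain i j where "i < length gs" "j < length gs" "p = gs!i" "q = gs!j"
        by (auto simp: in_set_conv_nth)
      then show "Rc \<le> \<bar>fst p - fst q\<bar>" using sep[OF G Rc] \<open>p \<noteq> q\<close> by blast
    qed
  qed
next
  fix gs S assume G: "is_greedy_schedule H V r0 Rc gs" and F: "feasible_schedule H V r0 Rc S"
  have "card S \<le> length gs - 0"
    using spec[OF opt_step[OF G assms(2), of "length gs"], of 0] F by simp
  then show "card S \<le> length gs" by simp
qed

end
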